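(* Let $p$ be a prime and $b$ an integer with $0<b\le b^{-1}<p$. Write $p=bq+r$ with $0\le r<b$ and $p=b^{-1}s+t$ with $0\le t<b^{-1}$ (division algorithm). Then $\mathrm{inv}_{1,b}$ has 2 slopes if and only if $r=s$ and $q=t$.
   Context: Let $S=\mathbb{C}[x_1,x_2]$, $\zeta=e^{2\pi i/p}$, $G=\mathbb{Z}/p\mathbb{Z}=\langle\zeta\rangle$ acting on $S$ by $x_1\mapsto\zeta x_1$, $x_2\mapsto\zeta^bx_2$, with invariant ring $S^G_{1,b}$ (spanned by monomials $x_1^cx_2^d$ with $c+bd\equiv0\pmod p$). $\mathrm{inv}_{1,b}$ denotes the minimal set of monomial generators of $S^G_{1,b}$ as a $\mathbb{C}$-algebra: the nonconstant invariant monomials that are not a product of two nonconstant invariant monomials. $b^{-1}$ is the unique integer $0<b^{-1}<p$ with $bb^{-1}\equiv1\pmod p$. Writing $\mathrm{inv}_{1,b}=\{x_1^{c_0}x_2^{d_0},\dots,x_1^{c_n}x_2^{d_n}\}$ in lexicographic order with $x_1>x_2$, set $\mathrm{sl}_{1,b}=\left\{\frac{d_{i+1}-d_i}{c_{i+1}-c_i}\;\middle|\;0\le i\le n-1\right\}$, the set of slopes between consecutive exponent vectors; $\mathrm{inv}_{1,b}$ is said to have 2 slopes if $|\mathrm{sl}_{1,b}|=2$. *)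

theory Defs
  imports Complex_Main "HOL-Computational_Algebra.Primes"
begin

text \<open>Monomials x1^c x2^d are represented by their exponent vectors (c,d) :: nat \<times> nat.
  The monomial is invariant under the action x1 \<mapsto> \<zeta> x1, x2 \<mapsto> \<zeta>^b x2 iff c + b d \<equiv> 0 (mod p).\<close>

definition is_invariant :: "nat \<Rightarrow> nat \<Rightarrow> nat \<times> nat \<Rightarrow> bool" where
  "is_invariant p b m \<longleftrightarrow> (fst m + b * snd m) mod p = 0"

definition nonconst :: "nat \<times> nat \<Rightarrow> bool" where
  "nonconst m \<longleftrightarrow> m \<noteq> (0, 0)"

text \<open>inv_{1,b}: nonconstant invariant monomials that are not a product of two
  nonconstant invariant monomials (product = sum of exponent vectors).\<close>
definition inv_gens :: "nat \<Rightarrow> nat \<Rightarrow> (nat \<times> nat) set" where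
  "inv_gens p b = {m. is_invariant p b m \<and> nonconst m \<and>
     \<not> (\<exists>m1 m2. is_invariant p b m1 \<and> nonconst m1 \<and> is_invariant p b m2 \<and> nonconst m2 \<and>
              fst m = fst m1 + fst m2 \<and> snd m = snd m1 + snd m2)}"

definition lex_gt :: "nat \<times> nat \<Rightarrow> nat \<times> nat \<Rightarrow> bool" where
  "lex_gt m m' \<longleftrightarrow> fst m > fst m' \<or> (fst m = fst m' \<and> snd m > snd m')"

definition slope :: "nat \<times> nat \<Rightarrow> nat \<times> nat \<Rightarrow> rat" where
  "slope m m' = (of_nat (snd m') - of_nat (snd m)) / (of_nat (fst m') - of_nat (fst m))"

definition consecutive :: "(nat \<times> nat) set \<Rightarrow> nat \<times> nat \<Rightarrow> nat \<times> nat \<Rightarrow> bool" where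
  "consecutive S m m' \<longleftrightarrow> m \<in> S \<and> m' \<in> S \<and> lex_gt m m' \<and>
     \<not> (\<exists>h\<in>S. lex_gt m h \<and> lex_gt h m')"

definition slopes :: "nat \<Rightarrow> nat \<Rightarrow> rat set" where
  "slopes p b = {slope m m' | m m'. consecutive (inv_gens p b) m m'}"

definition binv :: "nat \<Rightarrow> nat \<Rightarrow> nat" where
  "binv p b = (THE x. 0 < x \<and> x < p \<and> (b * x) mod p = 1)"

end

theory Submission
  imports Defs "HOL-Number_Theory.Cong"
begin

locale S2 =
  fixes p b a :: nat
  assumes p1: "1 < p" and b0: "0 < b" and bp: "b < p" and a0: "0 < a" and ap: "a < p"
    and ab: "(b*a) mod p = 1"
begin

lemma pdvd_ab: "int p dvd int b * int a - 1"
proof -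
  have "int (b*a) mod int p = 1 mod int p" using ab p1 by (metis of_nat_1 of_nat_mod mod_less)
  then show ?thesis by (simp add: mod_eq_dvd_iff)
qed

lemma inv_a: "(c + b*d) mod p = 0 \<longleftrightarrow> (a*c + d) mod p = 0"
proof -
  obtain k where k: "int b * int a - 1 = int p * k" using pdvd_ab by (auto simp: dvd_def)
  have e1': "int (a*c + d) = int a * int (c + b*d) - int d * (int b * int a - 1)"
    by (simp add: algebra_simps)
  have e1: "int (a*c + d) = int a * int (c + b*d) - int d * (int p * k)"
    using e1' k by simp
  have e2': "int (c + b*d) = int b * int (a*c + d) - int c * (int b * int a - 1)"
    by (simp add: algebra_simps)
  have e2: "int (c + b*d) = int b * int (a*c + d) - int c * (int p * k)"
    using e2' k by simp
  have "p dvd (c + b*d) \<longleftrightarrow> p dvd (a*c+d)"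
  proof
    assume "p dvd (c + b*d)"
    then have "int p dvd int (c + b*d)" by (simp only: int_dvd_int_iff)
    then have "int p dvd int (a*c+d)" unfolding e1 by (simp add: dvd_mult2)
    then show "p dvd (a*c+d)" by (simp only: int_dvd_int_iff)
  next
    assume "p dvd (a*c+d)"
    then have "int p dvd int (a*c + d)" by (simp only: int_dvd_int_iff)
    then have "int p dvd int (c+b*d)" unfolding e2 by (simp add: dvd_mult2)
    then show "p dvd (c+b*d)" by (simp only: int_dvd_int_iff)
  qed
  then show ?thesis by (simp add: dvd_eq_mod_eq_0)
qed

lemma wb: "is_invariant p b (c,d) \<Longrightarrow> (c,d) \<noteq> (0,0) \<Longrightarrow> p \<le> c + b*d"
proof -
  assume i: "is_invariant p b (c,d)" and n: "(c,d) \<noteq> (0,0)"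
  have "0 < c + b*d" using n b0 by auto
  moreover have "p dvd c + b*d" using i by (simp add: is_invariant_def dvd_eq_mod_eq_0)
  ultimately show ?thesis by (simp add: dvd_imp_le)
qed

lemma wa: "is_invariant p b (c,d) \<Longrightarrow> (c,d) \<noteq> (0,0) \<Longrightarrow> p \<le> a*c + d"
proof -
  assume i: "is_invariant p b (c,d)" and n: "(c,d) \<noteq> (0,0)"
  have "0 < a*c + d" using n a0 by auto
  moreover have "p dvd a*c + d" using i inv_a by (simp add: is_invariant_def dvd_eq_mod_eq_0)
  ultimately show ?thesis by (simp add: dvd_imp_le)
qed

lemma gen_w: "is_invariant p b (c,d) \<Longrightarrow> (c,d) \<noteq> (0,0) \<Longrightarrow>
   (\<And>x y. is_invariant p b (x,y) \<Longrightarrow> (x,y) \<noteq> (0,0) \<Longrightarrow> p \<le> w x y) \<Longrightarrow>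
   (\<And>x y x' y'. w (x+x') (y+y') = w x y + w x' y') \<Longrightarrow> w c d = p \<Longrightarrow> (c,d) \<in> inv_gens p b"
proof -
  assume i: "is_invariant p b (c,d)" and n: "(c,d) \<noteq> (0,0)"
    and W: "\<And>x y. is_invariant p b (x,y) \<Longrightarrow> (x,y) \<noteq> (0,0) \<Longrightarrow> p \<le> w x y"
    and add: "\<And>x y x' y'. w (x+x') (y+y') = w x y + w x' y'" and e: "w c d = p"
  show ?thesis unfolding inv_gens_def
  proof (intro CollectI conjI)
    show "is_invariant p b (c,d)" by fact
    show "nonconst (c,d)" using n by (simp add: nonconst_def)
    show "\<not> (\<exists>m1 m2. is_invariant p b m1 \<and> nonconst m1 \<and> is_invariant p b m2 \<and> nonconst m2 \<and>
              fst (c,d) = fst m1 + fst m2 \<and> snd (c,d) = snd m1 + snd m2)"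
    proof
      assume "\<exists>m1 m2. is_invariant p b m1 \<and> nonconst m1 \<and> is_invariant p b m2 \<and> nonconst m2 \<and>
              fst (c,d) = fst m1 + fst m2 \<and> snd (c,d) = snd m1 + snd m2"
      then obtain x y x' y' where h: "is_invariant p b (x,y)" "(x,y) \<noteq> (0,0)"
        "is_invariant p b (x',y')" "(x',y') \<noteq> (0,0)" "c = x + x'" "d = y + y'"
        by (auto simp: nonconst_def)
      have "p \<le> w x y" "p \<le> w x' y'" using W h by auto
      moreover have "w c d = w x y + w x' y'" using h add by simp
      ultimately show False using e p1 by linarith
    qed
  qed
qed

lemma gen_b: assumes e: "c + b*d = p" shows "(c,d) \<in> inv_gens p b"
proof (rule gen_w[where w="\<lambda>x y. x + b*y"])
  show "is_invariant p b (c,d)" using e by (simp add: is_invariant_def)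
  show "(c,d) \<noteq> (0,0)" using e p1 by auto
qed (use wb e in \<open>auto simp: algebra_simps\<close>)

lemma gen_a: assumes e: "a*c + d = p" shows "(c,d) \<in> inv_gens p b"
proof (rule gen_w[where w="\<lambda>x y. a*x + y"])
  show "is_invariant p b (c,d)" using e inv_a by (simp add: is_invariant_def)
  show "(c,d) \<noteq> (0,0)"
  proof
    assume "(c,d) = (0,0)" then show False using e p1 by simp
  qed
qed (use wa e in \<open>auto simp: algebra_simps\<close>)

lemma gen_props: "g \<in> inv_gens p b \<Longrightarrow> is_invariant p b g \<and> g \<noteq> (0,0)"
  by (simp add: inv_gens_def nonconst_def)

lemma dom: "(c,d) \<in> inv_gens p b \<Longrightarrow> is_invariant p b (x,y) \<Longrightarrow> (x,y) \<noteq> (0,0) \<Longrightarrow>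
   x \<le> c \<Longrightarrow> y \<le> d \<Longrightarrow> x = c \<and> y = d"
proof (rule ccontr)
  assume g: "(c,d) \<in> inv_gens p b" and i: "is_invariant p b (x,y)" and n: "(x,y) \<noteq> (0,0)"
    and le: "x \<le> c" "y \<le> d" and ne: "\<not> (x = c \<and> y = d)"
  have gi: "(c + b*d) mod p = 0" using g by (simp add: inv_gens_def is_invariant_def)
  have xi: "(x + b*y) mod p = 0" using i by (simp add: is_invariant_def)
  have "b*y \<le> b*d" using le by simp
  moreover have "b*(d-y) = b*d - b*y" by (simp add: diff_mult_distrib2)
  ultimately have eq: "c + b*d = (x + b*y) + ((c-x) + b*(d-y))" using le by linarith
  have "((c-x) + b*(d-y)) mod p = 0"
    using gi xi eq by (metis add_0 mod_add_right_eq mod_add_left_eq)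
  then have i2: "is_invariant p b (c-x, d-y)" by (simp add: is_invariant_def)
  have n2: "(c-x,d-y) \<noteq> (0,0)" using le ne by auto
  from g have "\<not> (\<exists>m1 m2. is_invariant p b m1 \<and> nonconst m1 \<and> is_invariant p b m2 \<and> nonconst m2 \<and>
              fst (c,d) = fst m1 + fst m2 \<and> snd (c,d) = snd m1 + snd m2)"
    unfolding inv_gens_def by blast
  moreover have "is_invariant p b (x,y) \<and> nonconst (x,y) \<and> is_invariant p b (c-x,d-y) \<and> nonconst (c-x,d-y) \<and>
              fst (c,d) = fst (x,y) + fst (c-x,d-y) \<and> snd (c,d) = snd (x,y) + snd (c-x,d-y)"
    using i n i2 n2 le by (simp add: nonconst_def)
  ultimately show False by blast
qed

lemma lexgen: assumes "m \<in> inv_gens p b" "m' \<in> inv_gens p b" "lex_gt m m'" shows "fst m' < fst m"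
proof (rule ccontr)
  assume "\<not> fst m' < fst m"
  with assms(3) have e: "fst m = fst m'" "snd m' < snd m" by (auto simp: lex_gt_def)
  obtain c d where m: "m = (c,d)" by force
  obtain x y where m': "m' = (x,y)" by force
  have "x = c \<and> y = d" using dom[of c d x y] assms gen_props[of m'] e m m' by auto
  then show False using e m m' by simp
qed

lemma slope_line_b: assumes "c + b*d = p" "c' + b*d' = p" "c' < c"
  shows "slope (c,d) (c',d') = - 1 / of_nat b"
proof -
  have "(of_nat (c + b*d)::rat) = of_nat (c' + b*d')" using assms by simp
  then have h: "(of_nat c'::rat) - of_nat c = - of_nat b * (of_nat d' - of_nat d)"
    by (simp add: algebra_simps)
  have "d' \<noteq> d" using assms by auto
  then have "(of_nat d'::rat) - of_nat d \<noteq> 0" by simp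
  then have nz: "(of_nat d'::rat) - of_nat d \<noteq> 0" by simp
  have "slope (c,d) (c',d') = (of_nat d' - of_nat d) / (- of_nat b * (of_nat d' - of_nat d))"
    unfolding slope_def fst_conv snd_conv h ..
  also have "\<dots> = - 1 / of_nat b" using nz b0 by (simp add: divide_simps)
  finally show ?thesis .
qed

lemma slope_line_a: assumes "a*c + d = p" "a*c' + d' = p" "c' < c"
  shows "slope (c,d) (c',d') = - of_nat a"
proof -
  have "(of_nat (a*c + d)::rat) = of_nat (a*c' + d')" using assms by simp
  then have h: "(of_nat d'::rat) - of_nat d = - of_nat a * (of_nat c' - of_nat c)"
    by (simp add: algebra_simps)
  have "(of_nat c'::rat) - of_nat c \<noteq> 0" using assms by simp
  then show ?thesis unfolding slope_def using h by (simp add: field_simps)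
qed

lemma in_slopes_b: "- 1 / of_nat b \<in> slopes p b"
proof -
  have g1: "(p,0) \<in> inv_gens p b" by (rule gen_b) simp
  have g2: "(p-b,1) \<in> inv_gens p b" by (rule gen_b) (use bp in simp)
  have "consecutive (inv_gens p b) (p,0) (p-b,1)"
    unfolding consecutive_def
  proof (intro conjI g1 g2)
    show "lex_gt (p, 0) (p - b, 1)" using b0 bp by (simp add: lex_gt_def)
    show "\<not> (\<exists>h\<in>inv_gens p b. lex_gt (p, 0) h \<and> lex_gt h (p - b, 1))"
    proof
      assume "\<exists>h\<in>inv_gens p b. lex_gt (p, 0) h \<and> lex_gt h (p - b, 1)"
      then obtain x y where h: "(x,y) \<in> inv_gens p b" "lex_gt (p, 0) (x,y)" "lex_gt (x,y) (p - b, 1)"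
        by force
      have xp: "x < p" using h(2) by (auto simp: lex_gt_def)
      have i: "is_invariant p b (x,y)" "(x,y) \<noteq> (0,0)" using gen_props[OF h(1)] by auto
      show False
      proof (cases "y = 0")
        case True
        then show ?thesis using wb[OF i] xp by simp
      next
        case False
        have "p - b \<le> x" using h(3) by (auto simp: lex_gt_def)
        then have "p - b = x \<and> 1 = y" using dom[OF h(1), of "p-b" 1] gen_props[OF g2] False by auto
        then show ?thesis using h(3) by (simp add: lex_gt_def)
      qed
    qed
  qed
  moreover have "slope (p,0) (p-b,1) = - 1 / of_nat b"
    by (rule slope_line_b) (use b0 bp in auto)
  ultimately show ?thesis unfolding slopes_def by force
qed

lemma in_slopes_a: "- of_nat a \<in> slopes p b"
proof -
  have g1: "(1,p-a) \<in> inv_gens p b" by (rule gen_a) (use ap in simp)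
  have g2: "(0,p) \<in> inv_gens p b" by (rule gen_a) simp
  have "consecutive (inv_gens p b) (1,p-a) (0,p)"
    unfolding consecutive_def
  proof (intro conjI g1 g2)
    show "lex_gt (1,p-a) (0,p)" by (simp add: lex_gt_def)
    show "\<not> (\<exists>h\<in>inv_gens p b. lex_gt (1,p-a) h \<and> lex_gt h (0,p))"
    proof
      assume "\<exists>h\<in>inv_gens p b. lex_gt (1,p-a) h \<and> lex_gt h (0,p)"
      then obtain x y where h: "(x,y) \<in> inv_gens p b" "lex_gt (1,p-a) (x,y)" "lex_gt (x,y) (0,p)"
        by force
      have i: "is_invariant p b (x,y)" "(x,y) \<noteq> (0,0)" using gen_props[OF h(1)] by auto
      show False
      proof (cases "x = 0")
        case True
        then have "p < y" using h(3) by (simp add: lex_gt_def)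
        then have "0 = x \<and> p = y" using dom[OF h(1), of 0 p] gen_props[OF g2] True by auto
        then show ?thesis using h(3) by (simp add: lex_gt_def)
      next
        case False
        then have "x = 1" "y < p - a" using h(2) by (auto simp: lex_gt_def)
        then show ?thesis using wa[OF i] by simp
      qed
    qed
  qed
  moreover have "slope (1,p-a) (0,p) = - of_nat a"
    by (rule slope_line_a) (use ap in auto)
  ultimately show ?thesis unfolding slopes_def by force
qed

lemma classify: assumes eb: "p = b*q + r" and ea: "p = a*r + q" and g: "(c,d) \<in> inv_gens p b"
  shows "(r \<le> c \<longrightarrow> c + b*d = p) \<and> (c \<le> r \<longrightarrow> a*c + d = p)"
proof (intro conjI impI)
  have i: "is_invariant p b (c,d)" "(c,d) \<noteq> (0,0)" using gen_props[OF g] by auto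
  assume rc: "r \<le> c"
  show "c + b*d = p"
  proof (cases "q \<le> d")
    case True
    have "(r,q) \<in> inv_gens p b" by (rule gen_b) (use eb in simp)
    then have "r = c \<and> q = d" using dom[OF g, of r q] gen_props True rc by auto
    then show ?thesis using eb by simp
  next
    case False
    then have "b*d < b*q" using b0 by simp
    then have lt: "b*d < p" using eb by linarith
    have "(p - b*d, d) \<in> inv_gens p b" by (rule gen_b) (use lt in simp)
    moreover have "p - b*d \<le> c" using wb[OF i] by linarith
    ultimately have "p - b*d = c" using dom[OF g, of "p-b*d" d] gen_props by blast
    then show ?thesis using lt by simp
  qed
next
  have i: "is_invariant p b (c,d)" "(c,d) \<noteq> (0,0)" using gen_props[OF g] by auto
  assume cr: "c \<le> r"
  then have "a*c \<le> a*r" by simp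
  then have le: "a*c \<le> p" using ea by linarith
  have "(c, p - a*c) \<in> inv_gens p b" by (rule gen_a) (use le in simp)
  moreover have "p - a*c \<le> d" using wa[OF i] by linarith
  ultimately have "p - a*c = d" using dom[OF g, of c "p-a*c"] gen_props by blast
  then show "a*c + d = p" using le by simp
qed

lemma sub: assumes eb: "p = b*q + r" and ea: "p = a*r + q"
  shows "slopes p b \<subseteq> {- 1 / of_nat b, - of_nat a}"
proof
  fix x assume "x \<in> slopes p b"
  then obtain c d c' d' where cons: "consecutive (inv_gens p b) (c,d) (c',d')" and x: "x = slope (c,d) (c',d')"
    unfolding slopes_def by force
  have g: "(c,d) \<in> inv_gens p b" "(c',d') \<in> inv_gens p b" "lex_gt (c,d) (c',d')"
    using cons by (auto simp: consecutive_def)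
  have lt: "c' < c" using lexgen[OF g] by simp
  have rq: "(r,q) \<in> inv_gens p b" by (rule gen_b) (use eb in simp)
  note cl = classify[OF eb ea g(1)] classify[OF eb ea g(2)]
  show "x \<in> {- 1 / of_nat b, - of_nat a}"
  proof (cases "r \<le> c'")
    case True
    then have "x = - 1 / of_nat b" using x slope_line_b[OF _ _ lt] cl lt by auto
    then show ?thesis by simp
  next
    case False
    show ?thesis
    proof (cases "c \<le> r")
      case True
      then have "x = - of_nat a" using x slope_line_a[OF _ _ lt] cl lt by auto
      then show ?thesis by simp
    next
      case False
      with \<open>\<not> r \<le> c'\<close> have "lex_gt (c,d) (r,q)" "lex_gt (r,q) (c',d')" by (auto simp: lex_gt_def)
      then show ?thesis using cons rq by (auto simp: consecutive_def)
    qed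
  qed
qed

lemma forward: assumes b2: "2 \<le> b" and S: "slopes p b \<subseteq> {- 1 / of_nat b, - of_nat a}"
  shows "p mod b = p div a \<and> p div b = p mod a"
proof -
  define q where "q = p div b"
  define r where "r = p mod b"
  have eb: "p = b*q + r" by (simp add: q_def r_def)
  have rb: "r < b" using b0 by (simp add: r_def)
  have rq: "(r,q) \<in> inv_gens p b" by (rule gen_b) (use eb in simp)
  have claim: "\<forall>c d. (c,d) \<in> inv_gens p b \<longrightarrow> c \<le> r \<longrightarrow> r - c = n \<longrightarrow> d + a*c = q + a*r" for n
  proof (induction n rule: less_induct)
    case (less n)
    show ?case
    proof (intro allI impI)
      fix c d assume g: "(c,d) \<in> inv_gens p b" and cr: "c \<le> r" and n: "r - c = n"
      have i: "is_invariant p b (c,d)" "(c,d) \<noteq> (0,0)" using gen_props[OF g] by auto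
      show "d + a*c = q + a*r"
      proof (cases "c = r")
        case True
        show ?thesis
        proof (cases "q \<le> d")
          case True
          then have "r = c \<and> q = d" using dom[OF g, of r q] gen_props[OF rq] \<open>c = r\<close> by auto
          then show ?thesis by simp
        next
          case False
          then have "b*d < b*q" using b0 by simp
          then show ?thesis using wb[OF i] eb \<open>c = r\<close> by linarith
        qed
      next
        case False
        then have clt: "c < r" using cr by simp
        define c0 where "c0 = (LEAST x. \<exists>y. (x,y) \<in> inv_gens p b \<and> c < x)"
        have ex: "\<exists>y. (r,y) \<in> inv_gens p b \<and> c < r" using rq clt by blast
        have c0P: "\<exists>y. (c0,y) \<in> inv_gens p b \<and> c < c0" unfolding c0_def by (rule LeastI_ex) (use ex in blast)
        then obtain d0 where g0: "(c0,d0) \<in> inv_gens p b" and cc0: "c < c0" by blast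
        have c0r: "c0 \<le> r" unfolding c0_def by (rule Least_le) (use ex in blast)
        have IH: "d0 + a*c0 = q + a*r" using less.IH[of "r - c0"] g0 c0r n cc0 by auto
        have cons: "consecutive (inv_gens p b) (c0,d0) (c,d)"
          unfolding consecutive_def
        proof (intro conjI g0 g)
          show "lex_gt (c0,d0) (c,d)" using cc0 by (simp add: lex_gt_def)
          show "\<not> (\<exists>h\<in>inv_gens p b. lex_gt (c0,d0) h \<and> lex_gt h (c,d))"
          proof
            assume "\<exists>h\<in>inv_gens p b. lex_gt (c0,d0) h \<and> lex_gt h (c,d)"
            then obtain x y where h: "(x,y) \<in> inv_gens p b" "lex_gt (c0,d0) (x,y)" "lex_gt (x,y) (c,d)"
              by force
            have ih: "is_invariant p b (x,y)" "(x,y) \<noteq> (0,0)" using gen_props[OF h(1)] by auto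
            show False
            proof (cases "c < x")
              case True
              then have "c0 \<le> x" unfolding c0_def using h(1) by (intro Least_le) blast
              then have "x = c0" "y < d0" using h(2) by (auto simp: lex_gt_def)
              then have "x = c0 \<and> y = d0" using dom[OF g0 ih] by simp
              then show False using \<open>y < d0\<close> by simp
            next
              case False
              then have "x = c" "d < y" using h(3) by (auto simp: lex_gt_def)
              then have "c = x \<and> d = y" using dom[OF h(1), of c d] gen_props[OF g] by auto
              then show False using \<open>d < y\<close> by simp
            qed
          qed
        qed
        then have sl: "slope (c0,d0) (c,d) \<in> {- 1 / of_nat b, - of_nat a}" using S unfolding slopes_def by blast
        have nz: "(of_nat c::rat) - of_nat c0 \<noteq> 0" using cc0 by simp
        have "slope (c0,d0) (c,d) \<noteq> - 1 / of_nat b"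
        proof
          assume e: "slope (c0,d0) (c,d) = - 1 / of_nat b"
          from e have "(of_nat d - of_nat d0) * of_nat b = (of_nat c0 - of_nat c :: rat)"
            unfolding slope_def using nz b0 by (simp add: field_simps)
          then have "rat_of_int ((int d - int d0) * int b) = rat_of_int (int c0 - int c)" by simp
          then have E: "(int d - int d0) * int b = int c0 - int c" by (simp only: of_int_eq_iff)
          have lo: "int c0 - int c > 0" and hi: "int c0 - int c < int b" using cc0 c0r rb by auto
          have "int d - int d0 \<le> 0 \<or> int d - int d0 \<ge> 1" by linarith
          then show False
          proof
            assume "int d - int d0 \<le> 0"
            then have "(int d - int d0) * int b \<le> 0" by (simp add: mult_nonpos_nonneg)
            then show False using E lo by linarith
          next
            assume "int d - int d0 \<ge> 1"
            then have "(int d - int d0) * int b \<ge> 1 * int b" by (intro mult_right_mono) auto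
            then show False using E hi by linarith
          qed
        qed
        with sl have "slope (c0,d0) (c,d) = - of_nat a" by blast
        then have "(of_nat d - of_nat d0 :: rat) = - of_nat a * (of_nat c - of_nat c0)"
          unfolding slope_def using nz by (simp add: field_simps)
        then have "rat_of_int (int d - int d0) = rat_of_int (- int a * (int c - int c0))" by simp
        then have "int d - int d0 = - int a * (int c - int c0)" by (simp only: of_int_eq_iff)
        then have "int (d + a*c) = int (d0 + a*c0)" by (simp add: algebra_simps)
        then have "d + a*c = d0 + a*c0" by (simp only: of_nat_eq_iff)
        with IH show ?thesis by simp
      qed
    qed
  qed
  have "(0,p) \<in> inv_gens p b" by (rule gen_a) simp
  then have pe: "p = q + a*r" using claim[of "r - 0", rule_format, of 0 p] by simp
  have qa: "q < a"
  proof (rule ccontr)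
    assume "\<not> q < a"
    then have le: "a*(r+1) \<le> p" using pe by (simp add: algebra_simps)
    define d where "d = p - a*(r+1)"
    have g: "(r+1, d) \<in> inv_gens p b" by (rule gen_a) (use le in \<open>simp add: d_def\<close>)
    have i: "is_invariant p b (r+1,d)" "(r+1,d) \<noteq> (0,0)" using gen_props[OF g] by auto
    show False
    proof (cases "q \<le> d")
      case True
      then have "r = r+1 \<and> q = d" using dom[OF g, of r q] gen_props[OF rq] by auto
      then show False by simp
    next
      case False
      then have "b*(d+1) \<le> b*q" by (intro mult_left_mono) auto
      then show False using wb[OF i] eb b2 by (simp add: algebra_simps)
    qed
  qed
  have "p div a = r" using pe qa by simp
  moreover have "p mod a = q" using pe qa by simp
  ultimately show ?thesis by (simp add: q_def r_def)
qed

end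

lemma binv_props: assumes pr: "prime p" and b0: "0 < b" and bp: "b < p"
  shows "0 < binv p b \<and> binv p b < p \<and> (b * binv p b) mod p = 1"
proof -
  have p1: "1 < p" using pr prime_gt_1_nat by blast
  have "\<not> p dvd b" using b0 bp by (auto dest: dvd_imp_le)
  then have "coprime p b" using pr prime_imp_coprime by blast
  then have cop: "coprime b p" by (simp add: coprime_commute)
  obtain x where x: "[b*x = Suc 0] (mod p)" using cong_solve_coprime_nat[OF cop] by blast
  define y where "y = x mod p"
  have y1: "(b*y) mod p = 1" using x p1 unfolding y_def cong_def by (simp add: mod_mult_right_eq)
  have yp: "y < p" using p1 by (simp add: y_def)
  have y0: "0 < y"
  proof (rule ccontr)
    assume "\<not> 0 < y"
    then have "y = 0" by simp
    then show False using y1 by simp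
  qed
  have uniq: "z = y" if "0 < z \<and> z < p \<and> (b*z) mod p = 1" for z
  proof -
    have "[b*z = b*y] (mod p)" using that y1 by (simp add: cong_def)
    then have "[z = y] (mod p)" using cong_mult_lcancel_nat[OF cop] by blast
    then show ?thesis using that yp by (simp add: cong_def)
  qed
  have "binv p b = y" unfolding binv_def
  proof (rule the_equality)
    show "0 < y \<and> y < p \<and> b*y mod p = 1" using y0 yp y1 by blast
  next
    fix z assume "0 < z \<and> z < p \<and> b*z mod p = 1"
    then show "z = y" by (rule uniq)
  qed
  then show ?thesis using y0 yp y1 by simp
qed

theorem theorem6p2:
  fixes p b :: nat
  assumes "prime p" and "0 < b" and "b \<le> binv p b" and "binv p b < p"
  shows "card (slopes p b) = 2 \<longleftrightarrow>
           (p mod b = p div (binv p b) \<and> p div b = p mod (binv p b))"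
proof -
  have bp: "b < p" using assms by linarith
  have P: "0 < binv p b \<and> binv p b < p \<and> (b * binv p b) mod p = 1"
    using binv_props[OF assms(1,2) bp] .
  have p1: "1 < p" using assms(1) prime_gt_1_nat by blast
  have ab: "(b * binv p b) mod p = 1" using P by blast
  have a0: "0 < binv p b" using P by blast
  interpret S2 p b "binv p b"
    by unfold_locales (rule p1, rule assms(2), rule bp, rule a0, rule assms(4), rule ab)
  show ?thesis
  proof (cases "b = 1")
    case True
    have "binv p b mod p = binv p b" by (rule mod_less) (rule assms(4))
    then have a1: "binv p b = 1" using ab True by simp
    have "slopes p b \<subseteq> {- 1 / of_nat b, - of_nat (binv p b)}"
      by (rule sub[of p 0]) (use True a1 in auto)
    then have "slopes p b \<subseteq> {- 1}" using True a1 by simp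
    then have "card (slopes p b) \<le> card {- 1 :: rat}" by (intro card_mono) auto
    then have "card (slopes p b) \<noteq> 2" by simp
    moreover have "\<not> (p mod b = p div (binv p b))" using True a1 p1 by simp
    ultimately show ?thesis by blast
  next
    case False
    then have b2: "2 \<le> b" using assms(2) by linarith
    have A: "- 1 / of_nat b \<in> slopes p b" "- of_nat (binv p b) \<in> slopes p b"
      using in_slopes_b in_slopes_a by auto
    have "1 / (of_nat b :: rat) \<le> 1" using b2 by simp
    moreover have "(2::rat) \<le> of_nat (binv p b)" using b2 assms(3) by simp
    moreover have "- 1 / of_nat b = - (1 / (of_nat b :: rat))" by simp
    ultimately have ne: "- 1 / of_nat b \<noteq> - (of_nat (binv p b) :: rat)" by linarith
    show ?thesis
    proof
      assume c2: "card (slopes p b) = 2"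
      then have fin: "finite (slopes p b)" by (metis card.infinite zero_neq_numeral)
      have "slopes p b \<subseteq> {- 1 / of_nat b, - of_nat (binv p b)}"
      proof
        fix x assume x: "x \<in> slopes p b"
        show "x \<in> {- 1 / of_nat b, - of_nat (binv p b)}"
        proof (rule ccontr)
          assume nx: "x \<notin> {- 1 / of_nat b, - of_nat (binv p b)}"
          have "{x, - 1 / of_nat b, - of_nat (binv p b)} \<subseteq> slopes p b" using x A by auto
          then have "card {x, - 1 / of_nat b, - of_nat (binv p b)} \<le> card (slopes p b)"
            using fin by (intro card_mono) auto
          moreover have "card {x, - 1 / of_nat b, - of_nat (binv p b)} = 3" using nx ne by simp
          ultimately show False using c2 by simp
        qed
      qed
      then show "p mod b = p div (binv p b) \<and> p div b = p mod (binv p b)"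
        using forward[OF b2] by blast
    next
      assume R: "p mod b = p div (binv p b) \<and> p div b = p mod (binv p b)"
      have eb: "p = b * (p div b) + p mod b" by simp
      have ea: "p = binv p b * (p mod b) + p div b"
        using R by (metis div_mult_mod_eq mult.commute)
      have "slopes p b \<subseteq> {- 1 / of_nat b, - of_nat (binv p b)}" by (rule sub[OF eb ea])
      with A have "slopes p b = {- 1 / of_nat b, - of_nat (binv p b)}" by blast
      then show "card (slopes p b) = 2" using ne by simp
    qed
  qed
qed

end
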